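(* In the fixed-base chain setting of the context, let $i\in\{1,\ldots,N\}$, let $\mathbf{V}_i$ be a matrix with $\mathrm{Range}(\mathbf{V}_i)=\mathcal{V}_i$, and suppose $\mathbf{C}_{i-1}$ is a matrix with $\mathrm{Range}(\mathbf{C}_{i-1}^\top)=\mathcal{K}_{i-1}$ (for $i=1$ one may take $\mathbf{C}_0=\mathbf{0}_{1\times10}$). Put $\mathbf{D}_i=\mathbf{C}_{i-1}\mathbf{B}\big(({}^{J_i}\mathbf{X}_{i-1})^\top\big)$ and $\mathbf A_i=\mathbf{A}(\boldsymbol{\Phi}_i)$. Then the matrix $$\mathbf{C}_i=\begin{bmatrix}\mathbf{D}_i\\ \mathbf{D}_i\mathbf{A}_i\\ \vdots\\ \mathbf{D}_i\mathbf{A}_i^{9}\\ \mathbf{C}(\mathbf{V}_i,\boldsymbol{\Phi}_i)\end{bmatrix}$$ (the observability matrix of the pair $(\mathbf D_i,\mathbf A_i)$ stacked on $\mathbf{C}(\mathbf{V}_i,\boldsymbol{\Phi}_i)$) satisfies $\mathrm{Range}(\mathbf{C}_i^\top)=\mathcal{K}_i$.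
   Context: Spatial notation. For $\mathbf{x}\in\mathbb{R}^3$, $\mathbf{S}(\mathbf{x})$ is the skew-symmetric matrix with $\mathbf{S}(\mathbf{x})\mathbf{y}=\mathbf{x}\times\mathbf{y}$. For $\mathbf{v}=[\boldsymbol{\omega};\mathbf{u}]\in\mathbb{R}^6$, $(\mathbf{v}\times)=\begin{bmatrix}\mathbf{S}(\boldsymbol{\omega})&\mathbf{0}\\ \mathbf{S}(\mathbf{u})&\mathbf{S}(\boldsymbol{\omega})\end{bmatrix}$. A spatial transform is a matrix $\begin{bmatrix}\mathbf{R}&\mathbf{0}\\-\mathbf{R}\mathbf{S}(\mathbf{p})&\mathbf{R}\end{bmatrix}$ with $\mathbf{R}\in SO(3)$, $\mathbf{p}\in\mathbb{R}^3$. Inertial parameters $\boldsymbol{\pi}=[m,h_x,h_y,h_z,I_{xx},I_{xy},I_{xz},I_{yy},I_{yz},I_{zz}]^\top\in\mathbb{R}^{10}$; the linear map $[\boldsymbol{\pi}]^{\wedge}=\begin{bmatrix}\bar{\mathbf{I}}&\mathbf{S}(\mathbf{h})\\ \mathbf{S}(\mathbf{h})^{\top}&m\mathbf{1}_3\end{bmatrix}$ with $\mathbf{h}=[h_x,h_y,h_z]^\top$ and $\bar{\mathbf{I}}$ the symmetric $3\times3$ matrix with entries $I_{xx},I_{xy},\ldots$; $[\cdot]^{\vee}$ is its inverse on the 10-dimensional space of such matrices. Auxiliary matrices: $\mathbf{A}(\boldsymbol{\Phi})\in\mathbb{R}^{10\times10}$ is defined by $\mathbf{A}(\boldsymbol{\Phi})\boldsymbol{\pi}=\big[(\boldsymbol{\Phi}\times)^\top[\boldsymbol{\pi}]^\wedge+[\boldsymbol{\pi}]^\wedge(\boldsymbol{\Phi}\times)\big]^\vee$;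 for a spatial transform $\mathbf{X}$, $\mathbf{B}(\mathbf{X}^\top)\in\mathbb{R}^{10\times10}$ is defined by $\mathbf{B}(\mathbf{X}^\top)\boldsymbol{\pi}=\big[\mathbf{X}^\top[\boldsymbol{\pi}]^\wedge\mathbf{X}\big]^\vee$; for $\mathbf{V}\in\mathbb{R}^{6\times k}$ and $\boldsymbol\Phi\in\mathbb R^6$, $\mathbf{C}(\mathbf{V},\boldsymbol{\Phi})\in\mathbb{R}^{k\times10}$ is the matrix with $\mathbf{C}(\mathbf{V},\boldsymbol{\Phi})\boldsymbol{\pi}=\mathbf{V}^\top[\boldsymbol{\pi}]^\wedge\boldsymbol{\Phi}$. Fixed-base chain. Body $0$ is the fixed ground with $\mathbf{v}_0=\mathbf{0}$. For $i=1,\ldots,N$, joint $i$ has coordinate $q_i$ and $\mathbf{v}_i={}^{i}\mathbf{X}_{i-1}(q_i)\mathbf{v}_{i-1}+\boldsymbol{\Phi}_i\dot q_i$, with $\boldsymbol{\Phi}_i\in\mathbb{R}^6$ fixed, ${}^{i}\mathbf{X}_{i-1}(q_i)={}^{i}\mathbf{X}_{J_i}(q_i)\,{}^{J_i}\mathbf{X}_{i-1}$, ${}^{J_i}\mathbf{X}_{i-1}$ a constant spatial transform, ${}^{i}\mathbf{X}_{J_i}(0)=\mathbf{1}_6$, $\frac{d}{dq_i}{}^{i}\mathbf{X}_{J_i}(q_i)=-(\boldsymbol{\Phi}_i\times){}^{i}\mathbf{X}_{J_i}(q_i)$. $\mathcal{V}_i=\mathrm{span}\{\mathbf{v}_i(\mathbf{q},\dot{\mathbf{q}}):\mathbf{q},\dot{\mathbf{q}}\in\mathbb{R}^N\}$.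 Let $\mathbf{k}:\mathbb{R}^6\to\mathbb{R}^{10}$ satisfy $\mathbf{v}^\top[\boldsymbol{\pi}]^\wedge\mathbf{v}=\mathbf{k}(\mathbf{v})^\top\boldsymbol{\pi}$ for all $\mathbf v,\boldsymbol\pi$; $\mathcal{K}_i=\mathrm{span}\{\mathbf{k}(\mathbf{v}_i(\mathbf{q},\dot{\mathbf{q}})):\mathbf{q},\dot{\mathbf{q}}\in\mathbb{R}^N\}\subseteq\mathbb{R}^{10}$, $\mathcal K_0=\{\mathbf 0\}$. *)

theory Defs
  imports "HOL-Analysis.Analysis" "HOL-Library.Numeral_Type"
begin

text \<open>Spatial vectors: index type 3 + 3; Inl = angular part, Inr = linear part.
  Components of real^3 are indexed 1,2,3 (as in Cross3).\<close>

type_synonym sp = "3 + 3"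

definition skew :: "real^3 \<Rightarrow> real^3^3" where
  "skew x = vector [vector [0, - x$3, x$2], vector [x$3, 0, - x$1], vector [- x$2, x$1, 0]]"

definition blk :: "real^3^3 \<Rightarrow> real^3^3 \<Rightarrow> real^3^3 \<Rightarrow> real^3^3 \<Rightarrow> real^sp^sp" where
  "blk P Q R T = (\<chi> i j. case i of
      Inl a \<Rightarrow> (case j of Inl b \<Rightarrow> P$a$b | Inr b \<Rightarrow> Q$a$b)
    | Inr a \<Rightarrow> (case j of Inl b \<Rightarrow> R$a$b | Inr b \<Rightarrow> T$a$b))"

definition ang :: "real^sp \<Rightarrow> real^3" where "ang v = (\<chi> a. v $ Inl a)"
definition lin :: "real^sp \<Rightarrow> real^3" where "lin v = (\<chi> a. v $ Inr a)"

text \<open>spatial cross product matrix (v \<times>)\<close>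
definition crossM :: "real^sp \<Rightarrow> real^sp^sp" where
  "crossM v = blk (skew (ang v)) 0 (skew (lin v)) (skew (ang v))"

definition SO3 :: "real^3^3 \<Rightarrow> bool" where
  "SO3 R \<longleftrightarrow> orthogonal_matrix R \<and> det R = 1"

definition spatial_transform :: "real^sp^sp \<Rightarrow> bool" where
  "spatial_transform X \<longleftrightarrow> (\<exists>R p. SO3 R \<and> X = blk R 0 (- (R ** skew p)) R)"

text \<open>pi = [m, hx, hy, hz, Ixx, Ixy, Ixz, Iyy, Iyz, Izz] stored at indices 1..10\<close>
definition hat :: "real^10 \<Rightarrow> real^sp^sp" where
  "hat \<pi> = blk (vector [vector [\<pi>$5, \<pi>$6, \<pi>$7], vector [\<pi>$6, \<pi>$8, \<pi>$9], vector [\<pi>$7, \<pi>$9, \<pi>$10]])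
               (skew (vector [\<pi>$2, \<pi>$3, \<pi>$4]))
               (transpose (skew (vector [\<pi>$2, \<pi>$3, \<pi>$4])))
               (\<pi>$1 *\<^sub>R mat 1)"

text \<open>inverse of hat on the 10-dimensional space of such matrices (reads off the entries)\<close>
definition vee :: "real^sp^sp \<Rightarrow> real^10" where
  "vee M = vector [M $ Inr 1 $ Inr 1,
                   M $ Inl 3 $ Inr 2, M $ Inl 1 $ Inr 3, M $ Inl 2 $ Inr 1,
                   M $ Inl 1 $ Inl 1, M $ Inl 1 $ Inl 2, M $ Inl 1 $ Inl 3,
                   M $ Inl 2 $ Inl 2, M $ Inl 2 $ Inl 3, M $ Inl 3 $ Inl 3]"

definition Amat :: "real^sp \<Rightarrow> real^10^10" where
  "Amat \<Phi> = matrix (\<lambda>\<pi>. vee (transpose (crossM \<Phi>) ** hat \<pi> + hat \<pi> ** crossM \<Phi>))"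

text \<open>Bmat Y is B(Y) in the paper; for Y = X^T it satisfies B(X^T) pi = [X^T [pi] X]^vee\<close>
definition Bmat :: "real^sp^sp \<Rightarrow> real^10^10" where
  "Bmat Y = matrix (\<lambda>\<pi>. vee (Y ** hat \<pi> ** transpose Y))"

definition Cmat :: "real^'k^sp \<Rightarrow> real^sp \<Rightarrow> real^10^'k" where
  "Cmat V \<Phi> = matrix (\<lambda>\<pi>. transpose V *v (hat \<pi> *v \<Phi>))"

fun mpow :: "real^'n^'n \<Rightarrow> nat \<Rightarrow> real^'n^'n" where
  "mpow A 0 = mat 1"
| "mpow A (Suc n) = mpow A n ** A"

text \<open>spatial velocities of the chain; q, qd are joint positions/rates (joint j uses q j, j \<ge> 1)\<close>
fun vel :: "(nat \<Rightarrow> real \<Rightarrow> real^sp^sp) \<Rightarrow> (nat \<Rightarrow> real^sp^sp) \<Rightarrow> (nat \<Rightarrow> real^sp)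
            \<Rightarrow> (nat \<Rightarrow> real) \<Rightarrow> (nat \<Rightarrow> real) \<Rightarrow> nat \<Rightarrow> real^sp" where
  "vel XJ XT Phi q qd 0 = 0"
| "vel XJ XT Phi q qd (Suc i) =
     (XJ (Suc i) (q (Suc i)) ** XT (Suc i)) *v vel XJ XT Phi q qd i + qd (Suc i) *\<^sub>R Phi (Suc i)"

definition Vspace :: "(nat \<Rightarrow> real \<Rightarrow> real^sp^sp) \<Rightarrow> (nat \<Rightarrow> real^sp^sp) \<Rightarrow> (nat \<Rightarrow> real^sp)
            \<Rightarrow> nat \<Rightarrow> (real^sp) set" where
  "Vspace XJ XT Phi i = span {vel XJ XT Phi q qd i | q qd. True}"

definition Kspace :: "(real^sp \<Rightarrow> real^10) \<Rightarrow> (nat \<Rightarrow> real \<Rightarrow> real^sp^sp) \<Rightarrow> (nat \<Rightarrow> real^sp^sp)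
            \<Rightarrow> (nat \<Rightarrow> real^sp) \<Rightarrow> nat \<Rightarrow> (real^10) set" where
  "Kspace k XJ XT Phi i = span {k (vel XJ XT Phi q qd i) | q qd. True}"

text \<open>Range of a matrix (column space)\<close>
definition Range :: "real^'c^'r \<Rightarrow> (real^'r) set" where
  "Range M = range (\<lambda>x. M *v x)"

text \<open>The stacked matrix [D; D A; ...; D A^9; Cmat V Phi]; row Inl (j, r) is row r of D A^j,
  where j :: 10 is read as the exponent 0..9\<close>
definition stackC :: "real^10^'r \<Rightarrow> real^10^10 \<Rightarrow> real^10^'k \<Rightarrow> real^10^((10 \<times> 'r) + 'k)" where
  "stackC D A Cv = (\<chi> row. case row of
      Inl (j, r) \<Rightarrow> (D ** mpow A (nat (Rep_bit0 j))) $ r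
    | Inr c \<Rightarrow> Cv $ c)"

end

theory Submission
  imports Defs
begin

(* ---- part A ---- *)


lemma sum_sp: "(\<Sum>k\<in>(UNIV::sp set). f k) = (\<Sum>a\<in>UNIV. f (Inl a)) + (\<Sum>b\<in>UNIV. f (Inr b))"
  using sum.Plus[of "UNIV::3 set" "UNIV::3 set" f] by (simp add: comp_def)  

lemma blk_nth: "blk P Q R T $ Inl a $ Inl b = P$a$b" "blk P Q R T $ Inl a $ Inr b = Q$a$b"
   "blk P Q R T $ Inr a $ Inl b = R$a$b" "blk P Q R T $ Inr a $ Inr b = T$a$b"
  by (simp_all add: blk_def)

lemma blk_mult: "blk P Q R T ** blk P' Q' R' T' = blk (P**P'+Q**R') (P**Q'+Q**T') (R**P'+T**R') (R**Q'+T**T')"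
  unfolding vec_eq_iff
  apply (intro allI)
  subgoal for i j by (cases i; cases j; simp add: matrix_matrix_mult_def blk_nth sum_sp sum.distrib)
  done

lemma blk_transpose: "transpose (blk P Q R T) = blk (transpose P) (transpose R) (transpose Q) (transpose T)"
  unfolding vec_eq_iff
  apply (intro allI)
  subgoal for i j by (cases i; cases j; simp add: transpose_def blk_nth)
  done

lemma blk_add: "blk P Q R T + blk P' Q' R' T' = blk (P+P') (Q+Q') (R+R') (T+T')"
  unfolding vec_eq_iff
  apply (intro allI)
  subgoal for i j by (cases i; cases j; simp add: blk_nth)
  done

lemma skew_nth: "skew x $ 1 $ 1 = 0" "skew x $ 1 $ 2 = - x$3" "skew x $ 1 $ 3 = x$2"
  "skew x $ 2 $ 1 = x$3" "skew x $ 2 $ 2 = 0" "skew x $ 2 $ 3 = - x$1"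
  "skew x $ 3 $ 1 = - x$2" "skew x $ 3 $ 2 = x$1" "skew x $ 3 $ 3 = 0"
  by (simp_all add: skew_def)

lemma skew_cross: "skew x *v y = cross3 x y"
  by (simp add: vec_eq_iff forall_3 matrix_vector_mult_def sum_3 skew_nth cross3_simps)


(* ---- part H ---- *)


lemma forall_sp: "(\<forall>i::sp. P i) \<longleftrightarrow> P (Inl 1) \<and> P (Inl 2) \<and> P (Inl 3) \<and> P (Inr 1) \<and> P (Inr 2) \<and> P (Inr 3)"
proof -
  have "(\<forall>i::sp. P i) \<longleftrightarrow> (\<forall>a. P (Inl a)) \<and> (\<forall>b. P (Inr b))"
    by (auto, case_tac i, auto)
  then show ?thesis by (simp add: forall_3)
qed

lemma vec_eq_sp: "(M::real^sp^sp) = N \<longleftrightarrow> (\<forall>i j. M$i$j = N$i$j)"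
  by (simp add: vec_eq_iff)

lemma hat_Inl_Inl: "hat p $ Inl 1 $ Inl 1 = p$5" "hat p $ Inl 1 $ Inl 2 = p$6" "hat p $ Inl 1 $ Inl 3 = p$7"
  "hat p $ Inl 2 $ Inl 1 = p$6" "hat p $ Inl 2 $ Inl 2 = p$8" "hat p $ Inl 2 $ Inl 3 = p$9"
  "hat p $ Inl 3 $ Inl 1 = p$7" "hat p $ Inl 3 $ Inl 2 = p$9" "hat p $ Inl 3 $ Inl 3 = p$10"
  by (simp_all add: hat_def blk_nth)

lemma hat_Inl_Inr: "hat p $ Inl a $ Inr b = skew (vector [p$2, p$3, p$4]) $ a $ b"
  "hat p $ Inr a $ Inl b = skew (vector [p$2, p$3, p$4]) $ b $ a"
  "hat p $ Inr a $ Inr b = (if a = b then p$1 else 0)"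
  by (simp_all add: hat_def blk_nth transpose_def mat_def)

lemma hat_transpose: "transpose (hat p) = hat p"
  unfolding vec_eq_sp forall_sp
  by (simp add: transpose_def hat_Inl_Inl hat_Inl_Inr forall_3)

lemma hat_add: "hat (p + q) = hat p + hat q"
  unfolding vec_eq_sp forall_sp
  by (simp add: hat_Inl_Inl hat_Inl_Inr forall_3 skew_nth)

lemma hat_scale: "hat (c *\<^sub>R p) = c *\<^sub>R hat p"
  unfolding vec_eq_sp forall_sp
  by (simp add: hat_Inl_Inl hat_Inl_Inr forall_3 skew_nth)

lemma linear_hat: "linear hat"
  by (rule linearI) (simp_all add: hat_add hat_scale)

lemma linear_vee: "linear vee"
  by (rule linearI) (simp_all add: vee_def vec_eq_iff vector_def)

lemma vee_nth: "vee M $ 1 = M $ Inr 1 $ Inr 1" "vee M $ 2 = M $ Inl 3 $ Inr 2" "vee M $ 3 = M $ Inl 1 $ Inr 3"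
  "vee M $ 4 = M $ Inl 2 $ Inr 1" "vee M $ 5 = M $ Inl 1 $ Inl 1" "vee M $ 6 = M $ Inl 1 $ Inl 2"
  "vee M $ 7 = M $ Inl 1 $ Inl 3" "vee M $ 8 = M $ Inl 2 $ Inl 2" "vee M $ 9 = M $ Inl 2 $ Inl 3"
  "vee M $ 10 = M $ Inl 3 $ Inl 3"
  apply (simp_all add: vee_def vector_def)
  done
lemma hat_vee_crit:
  assumes sym: "transpose M = M"
    and ur: "\<And>a b. M$Inl a$Inr b = skew q $a$b"
    and lr: "\<And>a b. M$Inr a$Inr b = (if a = b then c else 0)"
  shows "hat (vee M) = M"
proof -
  have s: "M$j$i = M$i$j" for i j
  proof -
    have "transpose M $ i $ j = M $ i $ j" using sym by simp
    then show ?thesis by (simp add: transpose_def)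
  qed
  have u: "M$Inl a$Inr b = skew q $a$b" "M$Inr b$Inl a = skew q $a$b" for a b
    using ur[of a b] s[of "Inr b" "Inl a"] by simp_all
  have l: "M$Inr a$Inr b = (if a = b then c else 0)" for a b using lr by simp
  have s2: "M$Inl 2$Inl 1 = M$Inl 1$Inl 2" "M$Inl 3$Inl 1 = M$Inl 1$Inl 3" "M$Inl 3$Inl 2 = M$Inl 2$Inl 3"
    by (rule s)+
  show ?thesis
  unfolding vec_eq_sp forall_sp
  by (simp add: hat_Inl_Inl hat_Inl_Inr forall_3 skew_nth vee_nth u l s2)
qed


(* ---- part K ---- *)


lemma crossM_nth: "crossM v $ Inl a $ Inl b = skew (ang v) $ a $ b"
  "crossM v $ Inl a $ Inr b = 0" "crossM v $ Inr a $ Inl b = skew (lin v) $ a $ b"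
  "crossM v $ Inr a $ Inr b = skew (ang v) $ a $ b"
  by (simp_all add: crossM_def blk_nth)

lemma ang_nth: "ang v $ a = v $ Inl a" and lin_nth: "lin v $ a = v $ Inr a"
  by (simp_all add: ang_def lin_def)

lemma mmult_nth: "((A::real^sp^sp) ** B) $ i $ j = (\<Sum>a\<in>UNIV. A$i$Inl a * B$Inl a$j) + (\<Sum>b\<in>UNIV. A$i$Inr b * B$Inr b$j)"
  by (simp add: matrix_matrix_mult_def sum_sp)

lemma cases3: fixes x :: 3 obtains "x = 1" | "x = 2" | "x = 3" using exhaust_3 by blast

lemma transpose_plus: "transpose (A + B) = transpose A + transpose (B::'a::ring_1^'n^'m)"
  by (simp add: vec_eq_iff transpose_def)

lemma crossM_closure:
  "hat (vee (transpose (crossM v) ** hat p + hat p ** crossM v)) = transpose (crossM v) ** hat p + hat p ** crossM v"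
proof (rule hat_vee_crit[where q = "cross3 (vector [p$2, p$3, p$4]) (ang v) - p$1 *\<^sub>R lin v" and c = 0])
  show "transpose (transpose (crossM v) ** hat p + hat p ** crossM v) = transpose (crossM v) ** hat p + hat p ** crossM v"
    by (simp add: transpose_plus matrix_transpose_mul hat_transpose transpose_transpose add.commute)
  show "(transpose (crossM v) ** hat p + hat p ** crossM v) $ Inl a $ Inr b =
    skew (cross3 (vector [p $ 2, p $ 3, p $ 4]) (ang v) - p $ 1 *\<^sub>R lin v) $ a $ b" for a b
    apply (simp add: mmult_nth transpose_def crossM_nth hat_Inl_Inr sum_3)
    apply (cases a rule: cases3; cases b rule: cases3)
    apply (simp_all add: skew_nth cross3_def ang_nth lin_nth algebra_simps)
    done
  show "(transpose (crossM v) ** hat p + hat p ** crossM v) $ Inr a $ Inr b = (if a = b then 0 else 0)" for a b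
    apply (simp add: mmult_nth transpose_def crossM_nth hat_Inl_Inr sum_3)
    apply (cases a rule: cases3; cases b rule: cases3)
    apply (simp_all add: skew_nth algebra_simps)
    done
qed


(* ---- part X ---- *)


lemma hat_blk: "hat p = blk (vector [vector [p$5, p$6, p$7], vector [p$6, p$8, p$9], vector [p$7, p$9, p$10]])
               (skew (vector [p$2, p$3, p$4])) (transpose (skew (vector [p$2, p$3, p$4]))) (p$1 *\<^sub>R mat 1)"
  by (simp add: hat_def)

lemma neg_mv: "(- A) *v x = - (A *v (x::real^'n))"
  by (simp add: vec_eq_iff matrix_vector_mult_def sum_negf)

lemma smul_mv: "(c *\<^sub>R A) *v x = c *\<^sub>R (A *v (x::real^'n))"
  by (simp add: scaleR_matrix_vector_assoc)

lemma skew_transpose: "transpose (skew q) = - skew q"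
  by (simp add: vec_eq_iff forall_3 transpose_def skew_nth)

lemma transpose_neg: "transpose (- A) = - transpose (A::real^'n^'m)"
  by (simp add: vec_eq_iff transpose_def)

lemma skew_lin: "skew (a + c *\<^sub>R b) = skew a + c *\<^sub>R skew b"
  by (simp add: vec_eq_iff forall_3 skew_nth)

lemma UR_block:
  assumes "SO3 R"
  shows "((transpose R ** I + transpose (-(R ** skew q)) ** transpose (skew h)) ** 0 +
          (transpose R ** skew h + transpose (-(R ** skew q)) ** (m *\<^sub>R mat 1)) ** R)
         = skew (transpose R *v h + m *\<^sub>R q)"
proof -
  have o: "transpose R ** R = mat 1" using assms by (simp add: SO3_def orthogonal_matrix_def)
  have rot: "rotation_matrix (transpose R)" using assms
    by (simp add: SO3_def rotation_matrix_def orthogonal_matrix_transpose det_transpose)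
  have ox: "transpose R *v (R *v x) = x" for x
    by (simp add: matrix_vector_mul_assoc o)
  have c: "transpose R *v cross3 h (R *v x) = cross3 (transpose R *v h) x" for x
    using cross_rotation_matrix[OF rot, of h "R *v x"] ox[of x] by simp
  have ox': "(R *v x) v* R = x" for x using ox[of x] by simp
  have c': "cross3 h (R *v x) v* R = cross3 (h v* R) x" for x using c[of x] by simp
  show ?thesis
    unfolding matrix_eq
  proof
    fix x
    show "((transpose R ** I + transpose (-(R ** skew q)) ** transpose (skew h)) ** 0 +
          (transpose R ** skew h + transpose (-(R ** skew q)) ** (m *\<^sub>R mat 1)) ** R) *v x
         = skew (transpose R *v h + m *\<^sub>R q) *v x"
      by (simp add: matrix_vector_mul_assoc[symmetric] matrix_vector_mult_add_rdistrib
        transpose_neg matrix_transpose_mul skew_transpose neg_mv smul_mv skew_lin skew_cross c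
        ox' c' matrix_vector_mult_scaleR)
  qed
qed

lemma LR_block:
  assumes "SO3 R"
  shows "(transpose 0 ** I + transpose R ** transpose S) ** 0 +
      (transpose 0 ** S + transpose R ** (m *\<^sub>R mat 1)) ** R = m *\<^sub>R (mat 1 :: real^3^3)"
proof -
  have o: "transpose R ** R = mat 1" using assms by (simp add: SO3_def orthogonal_matrix_def)
  have ox: "(R *v x) v* R = x" for x
    using o by (metis matrix_vector_mul_assoc matrix_vector_mul_lid transpose_matrix_vector)
  show ?thesis unfolding matrix_eq
    by (simp add: matrix_vector_mul_assoc[symmetric] matrix_vector_mult_add_rdistrib smul_mv ox
          matrix_vector_mult_scaleR)
qed

lemma X_closure:
  assumes "spatial_transform X"
  shows "hat (vee (transpose X ** hat p ** X)) = transpose X ** hat p ** X"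
proof -
  obtain R q where R: "SO3 R" and X: "X = blk R 0 (- (R ** skew q)) R"
    using assms unfolding spatial_transform_def by blast
  show ?thesis
  proof (rule hat_vee_crit[where q = "transpose R *v vector [p$2, p$3, p$4] + p$1 *\<^sub>R q" and c = "p$1"])
    show "transpose (transpose X ** hat p ** X) = transpose X ** hat p ** X"
      by (simp add: matrix_transpose_mul hat_transpose transpose_transpose matrix_mul_assoc)
    show "(transpose X ** hat p ** X) $ Inl a $ Inr b =
        skew (transpose R *v vector [p$2, p$3, p$4] + p$1 *\<^sub>R q) $ a $ b" for a b
      unfolding X
      apply (simp only: hat_blk blk_transpose blk_mult blk_nth)
      apply (simp only: UR_block[OF R])
      done
    show "(transpose X ** hat p ** X) $ Inr a $ Inr b = (if a = b then p$1 else 0)" for a b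
      unfolding X
      apply (simp only: hat_blk blk_transpose blk_mult blk_nth)
      apply (simp only: LR_block[OF R])
      apply (simp add: mat_def)
      done
  qed
qed

(* ---- part Kr ---- *)


lemma mpow_comm: "A ** mpow A n = mpow A n ** A"
  by (induction n) (simp_all add: matrix_mul_assoc)

lemma mpow_Suc_mv: "mpow A (Suc j) *v x = A *v (mpow A j *v x)"
  by (simp add: mpow_comm[symmetric] matrix_vector_mul_assoc)

lemma transpose_mpow: "transpose (mpow A n) = mpow (transpose A) n"
proof (induction n)
  case 0 then show ?case by (simp add: transpose_mat)
next
  case (Suc n)
  have "transpose (mpow A (Suc n)) = transpose A ** transpose (mpow A n)"
    by (simp add: matrix_transpose_mul)
  also have "\<dots> = transpose A ** mpow (transpose A) n" using Suc by simp
  also have "\<dots> = mpow (transpose A) (Suc n)" by (simp add: mpow_comm)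
  finally show ?case .
qed

lemma krylov_invariant:
  fixes M :: "real^'n^'n" and X :: "(real^'n) set"
  assumes w: "w \<in> span {mpow M j *v x | j x. j < CARD('n) \<and> x \<in> X}"
  shows "M *v w \<in> span {mpow M j *v x | j x. j < CARD('n) \<and> x \<in> X}"
proof -
  define G where "G m = {mpow M j *v x | j x. j < m \<and> x \<in> X}" for m
  define Kr where "Kr m = span (G m)" for m
  have linM: "linear (\<lambda>x. M *v x)" by simp
  have mono: "Kr m \<subseteq> Kr m'" if "m \<le> m'" for m m'
    unfolding Kr_def G_def using that by (intro span_mono) force
  have img: "M *v v \<in> Kr (Suc m)" if "v \<in> Kr m" for v m
  proof -
    have "(\<lambda>x. M *v x) ` G m \<subseteq> G (Suc m)"
    proof
      fix y assume "y \<in> (\<lambda>x. M *v x) ` G m"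
      then obtain j x where "y = M *v (mpow M j *v x)" "j < m" "x \<in> X" unfolding G_def by blast
      then have "y = mpow M (Suc j) *v x \<and> Suc j < Suc m \<and> x \<in> X" by (simp only: mpow_Suc_mv) simp
      then show "y \<in> G (Suc m)" unfolding G_def by blast
    qed
    then have "span ((\<lambda>x. M *v x) ` G m) \<subseteq> Kr (Suc m)"
      unfolding Kr_def by (rule span_mono)
    moreover have "M *v v \<in> span ((\<lambda>x. M *v x) ` G m)"
      using that unfolding Kr_def span_linear_image[OF linM] by blast
    ultimately show ?thesis by blast
  qed
  have stab: "Kr (Suc m) = Kr (Suc (Suc m))" if "Kr m = Kr (Suc m)" for m
  proof
    show "Kr (Suc m) \<subseteq> Kr (Suc (Suc m))" by (rule mono) simp
    show "Kr (Suc (Suc m)) \<subseteq> Kr (Suc m)"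
      unfolding Kr_def[of "Suc (Suc m)"]
    proof (rule span_minimal)
      show "subspace (Kr (Suc m))" by (simp add: Kr_def)
      show "G (Suc (Suc m)) \<subseteq> Kr (Suc m)"
      proof
        fix g assume "g \<in> G (Suc (Suc m))"
        then obtain j x where g: "g = mpow M j *v x" and j: "j < Suc (Suc m)" and x: "x \<in> X"
          unfolding G_def by blast
        show "g \<in> Kr (Suc m)"
        proof (cases j)
          case 0
          then have "g \<in> G (Suc m)" using g x unfolding G_def by blast
          then show ?thesis unfolding Kr_def by (rule span_base)
        next
          case (Suc j')
          have "mpow M j' *v x \<in> G (Suc m)" using Suc j x unfolding G_def by auto
          then have "mpow M j' *v x \<in> Kr m" using that unfolding Kr_def by (simp add: span_base)
          then have "M *v (mpow M j' *v x) \<in> Kr (Suc m)" by (rule img)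
          then show ?thesis using g Suc by (simp only: mpow_Suc_mv)
        qed
      qed
    qed
  qed
  have ex: "\<exists>m\<le>CARD('n). Kr m = Kr (Suc m)"
  proof (rule ccontr)
    assume "\<not> ?thesis"
    then have ne: "\<And>m. m \<le> CARD('n) \<Longrightarrow> Kr m \<noteq> Kr (Suc m)" by blast
    have "m \<le> dim (Kr m)" if "m \<le> Suc CARD('n)" for m
      using that
    proof (induction m)
      case 0 then show ?case by simp
    next
      case (Suc m)
      have "Kr m \<subset> Kr (Suc m)" using mono[of m "Suc m"] ne[of m] Suc.prems by auto
      then have "span (G m) \<subset> span (G (Suc m))" by (simp add: Kr_def)
      then have "dim (G m) < dim (G (Suc m))" by (rule dim_psubset)
      then have "dim (Kr m) < dim (Kr (Suc m))" by (simp add: Kr_def dim_span)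
      with Suc show ?case by simp
    qed
    then have "Suc CARD('n) \<le> dim (Kr (Suc CARD('n)))" by simp
    moreover have "dim (Kr (Suc CARD('n))) \<le> CARD('n)" by (rule dim_subset_UNIV_cart)
    ultimately show False by simp
  qed
  then obtain m where m: "m \<le> CARD('n)" "Kr m = Kr (Suc m)" by blast
  have "Kr (m + d) = Kr (Suc (m + d))" for d
  proof (induction d)
    case 0 then show ?case using m by simp
  next
    case (Suc d) then show ?case using stab[of "m + d"] by simp
  qed
  from this[of "CARD('n) - m"] m have "Kr CARD('n) = Kr (Suc CARD('n))" by simp
  moreover have "M *v w \<in> Kr (Suc CARD('n))" using img[of w "CARD('n)"] w unfolding Kr_def G_def by blast
  ultimately show ?thesis unfolding Kr_def G_def by simp
qed


(* ---- part O ---- *)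


lemma gronwall0:
  fixes g g' :: "real \<Rightarrow> real"
  assumes der: "\<And>t. (g has_real_derivative g' t) (at t)"
    and bd: "\<And>t. \<bar>g' t\<bar> \<le> c * g t"
    and nn: "\<And>t. g t \<ge> 0"
    and g0: "g 0 = 0"
  shows "g t = 0"
proof (cases "t \<ge> 0")
  case True
  define h where "h x = g x * exp (- c * x)" for x
  have "h t \<le> h 0"
  proof (rule DERIV_nonpos_imp_nonincreasing[OF True])
    fix x :: real
    have "(h has_real_derivative (g' x * exp (- c * x) + g x * (exp (- c * x) * (- c)))) (at x)"
      unfolding h_def by (auto intro!: derivative_eq_intros der)
    moreover have "g' x * exp (- c * x) + g x * (exp (- c * x) * (- c)) \<le> 0"
    proof -
      have "g' x \<le> c * g x" using bd[of x] by linarith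
      then have "g' x * exp (- c * x) \<le> c * g x * exp (- c * x)" by (rule mult_right_mono) simp
      then show ?thesis by (simp add: algebra_simps)
    qed
    ultimately show "\<exists>y. DERIV h x :> y \<and> y \<le> 0" by blast
  qed
  then have "g t * exp (- c * t) \<le> 0" using g0 by (simp add: h_def)
  then have "g t \<le> 0" by (simp add: mult_le_0_iff)
  with nn[of t] show ?thesis by linarith
next
  case False
  then have tl: "t \<le> 0" by simp
  define h where "h x = g x * exp (c * x)" for x
  have "h t \<le> h 0"
  proof (rule DERIV_nonneg_imp_nondecreasing[OF tl])
    fix x :: real
    have "(h has_real_derivative (g' x * exp (c * x) + g x * (exp (c * x) * c))) (at x)"
      unfolding h_def by (auto intro!: derivative_eq_intros der)
    moreover have "g' x * exp (c * x) + g x * (exp (c * x) * c) \<ge> 0"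
    proof -
      have "- g' x \<le> c * g x" using bd[of x] by linarith
      then have "- g' x * exp (c * x) \<le> c * g x * exp (c * x)" by (rule mult_right_mono) simp
      then show ?thesis by (simp add: algebra_simps)
    qed
    ultimately show "\<exists>y. DERIV h x :> y \<and> y \<ge> 0" by blast
  qed
  then have "g t * exp (c * t) \<le> 0" using g0 by (simp add: h_def)
  then have "g t \<le> 0" by (simp add: mult_le_0_iff)
  with nn[of t] show ?thesis by linarith
qed

lemma deriv_in_subspace:
  fixes f :: "real \<Rightarrow> 'a::euclidean_space"
  assumes S: "subspace S" and fS: "\<And>t. f t \<in> S" and d: "(f has_vector_derivative f') (at t)"
  shows "f' \<in> S"
proof -
  obtain y z where y: "y \<in> span S" and z: "\<And>w. w \<in> span S \<Longrightarrow> orthogonal z w" and eq: "f' = y + z"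
    using orthogonal_subspace_decomp_exists by blast
  have "((\<lambda>t. z \<bullet> f t) has_vector_derivative z \<bullet> f') (at t)"
    using bounded_linear.has_vector_derivative[OF bounded_linear_inner_right d] by simp
  moreover have "(\<lambda>t. z \<bullet> f t) = (\<lambda>t. 0)"
    using z fS by (auto simp: orthogonal_def span_base)
  ultimately have "z \<bullet> f' = 0"
    using vector_derivative_unique_at[of "\<lambda>t. 0" "z \<bullet> f'" t 0] by simp
  moreover have "z \<bullet> y = 0" using z[OF y] by (simp add: orthogonal_def)
  ultimately have "z \<bullet> z = 0" using eq by (simp add: inner_add_right)
  then have "z = 0" by simp
  moreover have "y \<in> S" using y by (subst (asm) span_eq_iff[THEN iffD2, OF S])
  ultimately show ?thesis using eq by simp
qed


lemma ode_invariant: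
  fixes u :: "real \<Rightarrow> real^'n" and L :: "real^'n^'n"
  assumes der: "\<And>t. (u has_vector_derivative L *v u t) (at t)"
    and W: "subspace W" and inv: "\<And>w. w \<in> W \<Longrightarrow> L *v w \<in> W" and u0: "u 0 \<in> W"
  shows "u t \<in> W"
proof -
  obtain T where T0: "T \<subseteq> W" and Tor: "pairwise orthogonal T" and Tsp: "span T = W"
    using orthogonal_basis_subspace[OF W] by metis
  have fT: "finite T" using Tor pairwise_orthogonal_imp_finite by blast
  define P where "P x = x - (\<Sum>b\<in>T. (b \<bullet> x / (b \<bullet> b)) *\<^sub>R b)" for x :: "real^'n"
  have P1: "x - P x \<in> W" for x
  proof -
    have "(\<Sum>b\<in>T. (b \<bullet> x / (b \<bullet> b)) *\<^sub>R b) \<in> span T"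
      by (intro span_sum span_scale span_base)
    then show ?thesis using Tsp by (simp add: P_def)
  qed
  have P2: "orthogonal w (P x)" if "w \<in> W" for w x
    using Gram_Schmidt_step[OF Tor, of w x] that Tsp by (simp add: P_def)
  have P3: "P w = 0" if w: "w \<in> W" for w
  proof -
    have "w - (w - P w) \<in> W" by (rule subspace_diff[OF W w P1])
    then have "P w \<in> W" by simp
    then have "orthogonal (P w) (P w)" using P2 by blast
    then show ?thesis by (simp add: orthogonal_def)
  qed
  have Padd: "P (x + y) = P x + P y" for x y
    by (simp add: P_def inner_add_right add_divide_distrib scaleR_add_left sum.distrib algebra_simps)
  have Pscale: "P (c *\<^sub>R x) = c *\<^sub>R P x" for c x
    by (simp add: P_def scaleR_diff_right scaleR_sum_right)
  have linP: "linear P" by (rule linearI) (simp_all add: Padd Pscale)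
  have blP: "bounded_linear P" using linP linear_conv_bounded_linear by blast
  have linPL: "linear (\<lambda>x. P (L *v x))"
    by (rule linearI) (simp_all add: Padd Pscale matrix_vector_right_distrib matrix_vector_mult_scaleR)
  obtain K where K: "K > 0" "\<And>x. norm (P (L *v x)) \<le> norm x * K"
    using bounded_linear.pos_bounded linPL linear_conv_bounded_linear by blast
  define z where "z t = P (u t)" for t
  have dz: "(z has_vector_derivative P (L *v u t)) (at t)" for t
    unfolding z_def by (rule bounded_linear.has_vector_derivative[OF blP der])
  have PL: "P (L *v u t) = P (L *v z t)" for t
  proof -
    have "u t = (u t - z t) + z t" by simp
    then have "L *v u t = L *v (u t - z t) + L *v z t"
      by (metis matrix_vector_right_distrib)
    moreover have "P (L *v (u t - z t)) = 0"
      using P3 inv P1 by (simp add: z_def)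
    ultimately show ?thesis by (simp add: Padd)
  qed
  define g where "g t = z t \<bullet> z t" for t
  have dg: "(g has_real_derivative 2 * (z t \<bullet> P (L *v z t))) (at t)" for t
  proof -
    have "(g has_vector_derivative (z t \<bullet> P (L *v z t) + P (L *v z t) \<bullet> z t)) (at t)"
      unfolding g_def using bounded_bilinear.has_vector_derivative[OF bounded_bilinear_inner dz dz] PL
      by simp
    then show ?thesis
      by (simp add: has_real_derivative_iff_has_vector_derivative inner_commute)
  qed
  have bd: "\<bar>2 * (z t \<bullet> P (L *v z t))\<bar> \<le> (2 * K) * g t" for t
  proof -
    have "\<bar>z t \<bullet> P (L *v z t)\<bar> \<le> norm (z t) * norm (P (L *v z t))"
      by (rule Cauchy_Schwarz_ineq2)
    also have "\<dots> \<le> norm (z t) * (norm (z t) * K)"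
      by (rule mult_left_mono[OF K(2)]) simp
    also have "\<dots> = K * g t" by (simp add: g_def power2_norm_eq_inner[symmetric] power2_eq_square)
    finally show ?thesis by simp
  qed
  have g0: "g 0 = 0" using P3[OF u0] by (simp add: g_def z_def)
  have "g t = 0"
    by (rule gronwall0[OF dg bd _ g0]) (simp add: g_def)
  then have "z t = 0" by (simp add: g_def)
  then show ?thesis using P1[of "u t"] by (simp add: z_def)
qed


(* ---- part KK ---- *)


lemma matrix_apply: "linear f \<Longrightarrow> matrix f *v x = f (x::real^'n)"
  using matrix_vector_mul(2)[of f] by (metis)

lemma matrix_add_rdistrib: "((B + C) ** A) = (B ** A) + (C ** (A::real^'p^'n))"
  by (vector matrix_matrix_mult_def sum.distrib[symmetric] field_simps)

lemma linear_sandwich: "linear (\<lambda>p. vee (Y ** hat p ** Z))"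
proof (rule linearI)
  show "vee (Y ** hat (a + b) ** Z) = vee (Y ** hat a ** Z) + vee (Y ** hat b ** Z)" for a b
    by (simp add: hat_add matrix_add_ldistrib matrix_add_rdistrib linear_add[OF linear_vee])
  show "vee (Y ** hat (c *\<^sub>R a) ** Z) = c *\<^sub>R vee (Y ** hat a ** Z)" for c a
    by (simp add: hat_scale matrix_scalar_ac scalar_matrix_assoc[symmetric] linear_scale[OF linear_vee])
qed

lemma Bmat_apply: "Bmat Y *v p = vee (Y ** hat p ** transpose Y)"
  unfolding Bmat_def by (rule matrix_apply[OF linear_sandwich])

lemma linear_Aop: "linear (\<lambda>p. vee (transpose C ** hat p + hat p ** C))"
proof (rule linearI)
  show "vee (transpose C ** hat (a + b) + hat (a + b) ** C) =
    vee (transpose C ** hat a + hat a ** C) + vee (transpose C ** hat b + hat b ** C)" for a b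
    by (simp add: hat_add matrix_add_ldistrib matrix_add_rdistrib linear_add[OF linear_vee, symmetric] algebra_simps)
  show "vee (transpose C ** hat (c *\<^sub>R a) + hat (c *\<^sub>R a) ** C) = c *\<^sub>R vee (transpose C ** hat a + hat a ** C)" for c a
    by (simp add: hat_scale matrix_scalar_ac scalar_matrix_assoc[symmetric] linear_scale[OF linear_vee, symmetric]
        scaleR_add_right)
qed

lemma Amat_apply: "Amat v *v p = vee (transpose (crossM v) ** hat p + hat p ** crossM v)"
  unfolding Amat_def by (rule matrix_apply[OF linear_Aop])

lemma hat_sym_inner: "w \<bullet> (hat p *v v) = v \<bullet> (hat p *v w)"
proof -
  have "w \<bullet> (hat p *v v) = (w v* hat p) \<bullet> v" by (simp add: dot_lmul_matrix)
  also have "w v* hat p = hat p *v w"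
    by (metis hat_transpose transpose_matrix_vector)
  finally show ?thesis by (simp add: inner_commute)
qed

lemma inner_mv: "x \<bullet> (A *v y) = (transpose A *v x) \<bullet> (y::real^'n)"
  by (simp add: dot_lmul_matrix)

lemma mv_neg: "A *v (- x) = - (A *v (x::real^'n))"
  by (simp add: vec_eq_iff matrix_vector_mult_def sum_negf)

lemma inner_vm: "w \<bullet> (x v* C) = (C *v w) \<bullet> (x::real^'n)"
  by (metis dot_lmul_matrix inner_commute)

definition k2 :: "(real^sp \<Rightarrow> real^10) \<Rightarrow> real^sp \<Rightarrow> real^sp \<Rightarrow> real^10" where
  "k2 k v w = (1/4) *\<^sub>R (k (v + w) - k (v - w))"

context
  fixes k :: "real^sp \<Rightarrow> real^10"
  assumes kd: "\<And>v p. v \<bullet> (hat p *v v) = k v \<bullet> p"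
begin

lemma k2_inner: "k2 k v w \<bullet> p = v \<bullet> (hat p *v w)"
proof -
  have e0: "k2 k v w \<bullet> p = (1/4) * ((v + w) \<bullet> (hat p *v (v + w)) - (v - w) \<bullet> (hat p *v (v - w)))"
    by (simp add: k2_def inner_diff_left kd)
  have e1: "(v + w) \<bullet> (hat p *v (v + w)) = v \<bullet> (hat p *v v) + v \<bullet> (hat p *v w) + (w \<bullet> (hat p *v v) + w \<bullet> (hat p *v w))"
    by (simp only: matrix_vector_right_distrib inner_add_left inner_add_right)
  have e2: "(v - w) \<bullet> (hat p *v (v - w)) = v \<bullet> (hat p *v v) - v \<bullet> (hat p *v w) - (w \<bullet> (hat p *v v) - w \<bullet> (hat p *v w))"
    by (simp only: matrix_vector_mult_diff_distrib inner_diff_left inner_diff_right)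
  have e3: "w \<bullet> (hat p *v v) = v \<bullet> (hat p *v w)" by (rule hat_sym_inner)
  show ?thesis unfolding e0 e1 e2 e3 by simp
qed

lemma k_k2: "k v = k2 k v v"
  by (simp add: vector_eq_rdot[symmetric] k2_inner kd[symmetric])

lemma linear_k2: "linear (\<lambda>v. k2 k v w)"
  by (rule linearI) (simp_all add: vector_eq_rdot[symmetric] k2_inner inner_add_left inner_add_right
      inner_scaleR_left)

lemma k_plus: "k (a + s *\<^sub>R b) = k a + (2 * s) *\<^sub>R k2 k a b + (s * s) *\<^sub>R k b"
proof -
  have "k (a + s *\<^sub>R b) \<bullet> p = (k a + (2 * s) *\<^sub>R k2 k a b + (s * s) *\<^sub>R k b) \<bullet> p" for p
  proof -
    have e1: "k (a + s *\<^sub>R b) \<bullet> p = a \<bullet> (hat p *v a) + s * (a \<bullet> (hat p *v b)) + (s * (b \<bullet> (hat p *v a)) + s * s * (b \<bullet> (hat p *v b)))"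
      by (simp only: kd[symmetric] matrix_vector_right_distrib matrix_vector_mult_scaleR inner_add_left inner_add_right
        inner_scaleR_left inner_scaleR_right) (simp add: algebra_simps)
    have e2: "(k a + (2 * s) *\<^sub>R k2 k a b + (s * s) *\<^sub>R k b) \<bullet> p =
        a \<bullet> (hat p *v a) + 2 * s * (a \<bullet> (hat p *v b)) + s * s * (b \<bullet> (hat p *v b))"
      by (simp only: inner_add_left inner_scaleR_left k2_inner kd[symmetric])
    have e3: "b \<bullet> (hat p *v a) = a \<bullet> (hat p *v b)" by (rule hat_sym_inner)
    show ?thesis unfolding e1 e2 e3 by (simp add: algebra_simps)
  qed
  then have "\<forall>p. k (a + s *\<^sub>R b) \<bullet> p = (k a + (2 * s) *\<^sub>R k2 k a b + (s * s) *\<^sub>R k b) \<bullet> p" by blast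
  then show ?thesis by (simp only: vector_eq_rdot)
qed

lemma k_transform:
  assumes cl: "\<And>p. hat (vee (transpose M ** hat p ** M)) = transpose M ** hat p ** M"
  shows "k (M *v v) = transpose (Bmat (transpose M)) *v k v"
proof -
  have "k (M *v v) \<bullet> p = (transpose (Bmat (transpose M)) *v k v) \<bullet> p" for p
  proof -
    have "k (M *v v) \<bullet> p = (M *v v) \<bullet> (hat p *v (M *v v))" by (simp add: kd)
    also have "\<dots> = (hat p *v (M *v v)) \<bullet> (M *v v)" by (rule inner_commute)
    also have "\<dots> = (transpose M *v (hat p *v (M *v v))) \<bullet> v" by (rule inner_mv)
    also have "\<dots> = ((transpose M ** hat p ** M) *v v) \<bullet> v" by (simp only: matrix_vector_mul_assoc matrix_mul_assoc)
    also have "\<dots> = v \<bullet> ((transpose M ** hat p ** M) *v v)" by (rule inner_commute)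
    also have "\<dots> = v \<bullet> (hat (vee (transpose M ** hat p ** M)) *v v)" by (simp add: cl)
    also have "\<dots> = k v \<bullet> (Bmat (transpose M) *v p)"
      by (simp add: kd Bmat_apply transpose_transpose)
    also have "\<dots> = (transpose (Bmat (transpose M)) *v k v) \<bullet> p"
      by (simp add: inner_mv)
    finally show ?thesis .
  qed
  then have "\<forall>p. k (M *v v) \<bullet> p = (transpose (Bmat (transpose M)) *v k v) \<bullet> p" by blast
  then show ?thesis by (simp only: vector_eq_rdot)
qed

lemma k_rep: "k x = (\<Sum>e\<in>Basis. (x \<bullet> (hat e *v x)) *\<^sub>R e)"
proof -
  have "k x = (\<Sum>e\<in>Basis. (k x \<bullet> e) *\<^sub>R e)" by (simp only: euclidean_representation)
  also have "\<dots> = (\<Sum>e\<in>Basis. (x \<bullet> (hat e *v x)) *\<^sub>R e)" by (simp only: kd)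
  finally show ?thesis .
qed

lemma k_ode:
  fixes F :: "real \<Rightarrow> real^sp^sp" and y :: "real^sp"
  assumes dF: "(F has_vector_derivative (- (crossM v ** F t))) (at t)"
  shows "((\<lambda>s. k (F s *v y)) has_vector_derivative (- (transpose (Amat v) *v k (F t *v y)))) (at t)"
proof -
  define w where "w s = F s *v y" for s
  define C where "C = crossM v"
  have blM: "bounded_linear (\<lambda>M::real^sp^sp. M *v y)"
  proof -
    have "linear (\<lambda>M::real^sp^sp. M *v y)"
      by (rule linearI) (simp_all add: matrix_vector_mult_add_rdistrib smul_mv)
    then show ?thesis using linear_conv_bounded_linear by blast
  qed
  have dw: "(w has_vector_derivative - (C *v w t)) (at t)"
  proof -
    have wd: "w = (\<lambda>s. F s *v y)" by (simp add: w_def fun_eq_iff)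
    show ?thesis
      using bounded_linear.has_vector_derivative[OF blM dF]
      by (simp add: wd C_def neg_mv matrix_vector_mul_assoc[symmetric])
  qed
  have blH: "bounded_linear (\<lambda>x. hat e *v x)" for e
    using matrix_vector_mul_linear linear_conv_bounded_linear by blast
  define d where "d e = w t \<bullet> (hat e *v - (C *v w t)) + - (C *v w t) \<bullet> (hat e *v w t)" for e
  have de: "((\<lambda>s. w s \<bullet> (hat e *v w s)) has_vector_derivative d e) (at t)" for e
    using bounded_bilinear.has_vector_derivative[OF bounded_bilinear_inner dw
        bounded_linear.has_vector_derivative[OF blH dw]]
    by (simp add: d_def)
  have dsum: "((\<lambda>s. \<Sum>e\<in>Basis. (w s \<bullet> (hat e *v w s)) *\<^sub>R e) has_vector_derivative (\<Sum>e\<in>Basis. d e *\<^sub>R e)) (at t)"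
    by (intro has_vector_derivative_sum bounded_linear.has_vector_derivative[OF bounded_linear_scaleR_left] de)
  have deq: "d e = (- (transpose (Amat v) *v k (w t))) \<bullet> e" for e
  proof -
    have "(- (transpose (Amat v) *v k (w t))) \<bullet> e = - (k (w t) \<bullet> (Amat v *v e))"
      by (simp add: inner_mv)
    also have "\<dots> = - (w t \<bullet> (hat (Amat v *v e) *v w t))" by (simp add: kd)
    also have "hat (Amat v *v e) = transpose C ** hat e + hat e ** C"
      by (simp add: Amat_apply crossM_closure C_def)
    also have "- (w t \<bullet> ((transpose C ** hat e + hat e ** C) *v w t)) =
        - ((C *v w t) \<bullet> (hat e *v w t) + w t \<bullet> (hat e *v (C *v w t)))"
      by (simp add: matrix_vector_mult_add_rdistrib inner_add_right matrix_vector_mul_assoc[symmetric]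
          inner_vm)
    also have "\<dots> = d e"
      by (simp add: d_def inner_minus_left inner_minus_right mv_neg)
    finally show ?thesis by simp
  qed
  have "(\<Sum>e\<in>Basis. d e *\<^sub>R e) = - (transpose (Amat v) *v k (w t))"
    by (simp only: deq euclidean_representation)
  then show ?thesis using dsum by (simp add: k_rep[symmetric] w_def)
qed

end

(* ---- part M ---- *)


lemma Range_cols: "Range (M::real^'c^'r) = span (range (\<lambda>j. column j M))"
proof
  show "Range M \<subseteq> span (range (\<lambda>j. column j M))"
  proof
    fix y assume "y \<in> Range M"
    then obtain x where y: "y = M *v x" by (auto simp: Range_def)
    have "M *v x = (\<Sum>j\<in>UNIV. x$j *\<^sub>R column j M)"
      by (simp add: matrix_mult_sum scalar_mult_eq_scaleR)
    also have "\<dots> \<in> span (range (\<lambda>j. column j M))"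
      by (intro span_sum span_scale span_base) auto
    finally show "y \<in> span (range (\<lambda>j. column j M))" using y by simp
  qed
  show "span (range (\<lambda>j. column j M)) \<subseteq> Range M"
  proof (rule span_minimal)
    show "range (\<lambda>j. column j M) \<subseteq> Range M"
      by (auto simp: Range_def matrix_vector_mult_basis[symmetric])
    have "Range M = (\<lambda>x. M *v x) ` UNIV" by (simp add: Range_def)
    then show "subspace (Range M)"
      using linear_subspace_image[OF matrix_vector_mul_linear subspace_UNIV] by simp
  qed
qed

lemma row_eq: "row r M = M $ r"
  by (simp add: row_def vec_eq_iff)

lemma Range_rows: "Range (transpose (M::real^'c^'r)) = span (range (\<lambda>r. M $ r))"
  by (simp add: Range_cols row_eq)

lemma row_mult: "((D::real^'n^'m) ** M) $ r = transpose M *v (D $ r)"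
  by (simp add: vec_eq_iff matrix_matrix_mult_def matrix_vector_mult_def transpose_def mult.commute)

lemma stackC_Inl: "stackC D A Cv $ Inl (j, r) = (D ** mpow A (nat (Rep_bit0 j))) $ r"
  by (simp add: stackC_def)

lemma stackC_Inr: "stackC D A Cv $ Inr c = Cv $ c"
  by (simp add: stackC_def)

lemma rows_stackC: "range (\<lambda>x. stackC D A Cv $ x) =
   {(D ** mpow A (nat (Rep_bit0 (j::10)))) $ r | j r. True} \<union> range (\<lambda>c. Cv $ c)"
proof (intro equalityI subsetI)
  fix y assume "y \<in> range (\<lambda>x. stackC D A Cv $ x)"
  then obtain x where y: "y = stackC D A Cv $ x" by blast
  show "y \<in> {(D ** mpow A (nat (Rep_bit0 (j::10)))) $ r | j r. True} \<union> range (\<lambda>c. Cv $ c)"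
  proof (cases x)
    case (Inl p)
    obtain j r where "p = (j, r)" by (cases p)
    then have "y = (D ** mpow A (nat (Rep_bit0 j))) $ r" using y Inl by (simp add: stackC_Inl)
    then show ?thesis by blast
  next
    case (Inr c)
    then show ?thesis using y by (auto simp: stackC_Inr)
  qed
next
  fix y assume "y \<in> {(D ** mpow A (nat (Rep_bit0 (j::10)))) $ r | j r. True} \<union> range (\<lambda>c. Cv $ c)"
  then show "y \<in> range (\<lambda>x. stackC D A Cv $ x)"
  proof
    assume "y \<in> {(D ** mpow A (nat (Rep_bit0 (j::10)))) $ r | j r. True}"
    then obtain j :: 10 and r where "y = (D ** mpow A (nat (Rep_bit0 j))) $ r" by blast
    then have "y = stackC D A Cv $ Inl (j, r)" by (simp add: stackC_Inl)
    then show ?thesis by blast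
  next
    assume "y \<in> range (\<lambda>c. Cv $ c)"
    then obtain c where "y = Cv $ c" by blast
    then have "y = stackC D A Cv $ Inr c" by (simp add: stackC_Inr)
    then show ?thesis by blast
  qed
qed

lemma Rep_bit0_10: "\<exists>jj::10. nat (Rep_bit0 jj) = j" if "j < 10" for j :: nat
proof -
  have "int j \<in> {0..<2 * int CARD(5)}" using that by simp
  moreover have "range (Rep_bit0 :: 10 \<Rightarrow> int) = {0..<2 * int CARD(5)}"
    by (rule type_definition.Rep_range[OF type_definition_bit0])
  ultimately obtain jj :: 10 where "Rep_bit0 jj = int j"
    by (metis imageE)
  then have "nat (Rep_bit0 jj) = j" by simp
  then show ?thesis by blast
qed

lemma vel_upd: "n < m \<Longrightarrow> vel XJ XT Phi (q(m := a)) (qd(m := b)) n = vel XJ XT Phi q qd n"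
  by (induction n) auto

lemma vel_zero: "vel XJ XT Phi q (\<lambda>_. 0) n = 0"
  by (induction n) auto


lemma tmv_nth: "(transpose V *v x) $ c = column c V \<bullet> x"
  by (simp add: matrix_vector_mult_def transpose_def column_def inner_vec_def mult.commute)

lemma Cmat_row:
  assumes kd: "\<And>v p. v \<bullet> (hat p *v v) = k v \<bullet> p"
  shows "Cmat V Phi $ c = k2 k (column c V) Phi"
proof -
  have lin: "linear (\<lambda>p. transpose V *v (hat p *v Phi))"
    by (rule linearI) (simp_all add: hat_add hat_scale matrix_vector_mult_add_rdistrib smul_mv
        matrix_vector_right_distrib matrix_vector_mult_scaleR)
  show ?thesis
  proof (subst vec_eq_iff, intro allI)
    fix l
    have "Cmat V Phi $ c $ l = (transpose V *v (hat (axis l 1) *v Phi)) $ c"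
      by (simp add: Cmat_def matrix_def)
    also have "\<dots> = k2 k (column c V) Phi \<bullet> axis l 1"
      by (simp only: tmv_nth k2_inner[OF kd])
    also have "\<dots> = k2 k (column c V) Phi $ l" by (simp add: inner_axis)
    finally show "Cmat V Phi $ c $ l = k2 k (column c V) Phi $ l" .
  qed
qed


(* ---- part Fin ---- *)


theorem lemma2:
  fixes N i :: nat
    and Phi :: "nat \<Rightarrow> real^sp"
    and XJ :: "nat \<Rightarrow> real \<Rightarrow> real^sp^sp"
    and XT :: "nat \<Rightarrow> real^sp^sp"
    and k :: "real^sp \<Rightarrow> real^10"
    and V :: "real^'k^sp"
    and Cprev :: "real^10^'r"
  assumes XT_spatial: "\<And>j. j \<in> {1..N} \<Longrightarrow> spatial_transform (XT j)"
    and XJ_zero: "\<And>j. j \<in> {1..N} \<Longrightarrow> XJ j 0 = mat 1"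
    and XJ_deriv: "\<And>j t. j \<in> {1..N} \<Longrightarrow>
          (XJ j has_vector_derivative (- (crossM (Phi j) ** XJ j t))) (at t)"
    and k_def: "\<And>v \<pi>. v \<bullet> (hat \<pi> *v v) = k v \<bullet> \<pi>"
    and i: "i \<in> {1..N}"
    and V: "Range V = Vspace XJ XT Phi i"
    and Cprev: "Range (transpose Cprev) = Kspace k XJ XT Phi (i - 1)"
  shows "Range (transpose (stackC (Cprev ** Bmat (transpose (XT i))) (Amat (Phi i)) (Cmat V (Phi i))))
           = Kspace k XJ XT Phi i"
proof -
  obtain i' where ii: "i = Suc i'" using i by (cases i) auto
  have i1: "i - 1 = i'" using ii by simp
  define \<Phi> where "\<Phi> = Phi i"
  define X where "X = XT i"
  define AT where "AT = transpose (Amat \<Phi>)"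
  define BT where "BT = transpose (Bmat (transpose X))"
  define Kp where "Kp = Kspace k XJ XT Phi i'"
  define Ki where "Ki = Kspace k XJ XT Phi i"
  define Vs where "Vs = Vspace XJ XT Phi i"
  have kd: "\<And>v p. v \<bullet> (hat p *v v) = k v \<bullet> p" by (rule k_def)
  have subKi: "subspace Ki" by (simp add: Ki_def Kspace_def)
  have KiI: "k (vel XJ XT Phi q qd i) \<in> Ki" for q qd
    unfolding Ki_def Kspace_def by (rule span_base) blast
  have VsI: "vel XJ XT Phi q qd i \<in> Vs" for q qd
    unfolding Vs_def Vspace_def by (rule span_base) blast
  have Kp_eq: "Kp = span (range (\<lambda>r. Cprev $ r))"
  proof -
    have "Kp = Kspace k XJ XT Phi (i - 1)" by (simp add: Kp_def ii)
    then show ?thesis using Cprev by (simp only: Range_rows)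
  qed
  have Vs_eq: "Vs = span (range (\<lambda>c. column c V))"
    using V by (simp add: Vs_def Range_cols)
  have Xcl: "\<And>p. hat (vee (transpose X ** hat p ** X)) = transpose X ** hat p ** X"
    using X_closure XT_spatial[OF i] by (simp add: X_def)
  have Ktr: "k (X *v v) = BT *v k v" for v
    unfolding BT_def by (rule k_transform[OF kd Xcl])
  have velSuc: "vel XJ XT Phi q qd i = XJ i (q i) *v (X *v vel XJ XT Phi q qd i') + qd i *\<^sub>R \<Phi>" for q qd
    by (simp add: ii X_def \<Phi>_def matrix_vector_mul_assoc)
  have velUpd: "vel XJ XT Phi q (qd(i := b)) i = XJ i (q i) *v (X *v vel XJ XT Phi q qd i') + b *\<^sub>R \<Phi>" for q qd b
  proof -
    have "vel XJ XT Phi (q(i := q i)) (qd(i := b)) i' = vel XJ XT Phi q qd i'"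
      by (rule vel_upd) (simp add: ii)
    then show ?thesis using velSuc[of q "qd(i := b)"] by simp
  qed
  have velUpd2: "vel XJ XT Phi (q(i := a)) (qd(i := b)) i = XJ i a *v (X *v vel XJ XT Phi q qd i') + b *\<^sub>R \<Phi>" for q qd a b
  proof -
    have "vel XJ XT Phi (q(i := a)) (qd(i := b)) i' = vel XJ XT Phi q qd i'"
      by (rule vel_upd) (simp add: ii)
    then show ?thesis using velSuc[of "q(i := a)" "qd(i := b)"] by simp
  qed
  have dXJ: "\<And>t. (XJ i has_vector_derivative - (crossM \<Phi> ** XJ i t)) (at t)"
    using XJ_deriv[OF i] by (simp add: \<Phi>_def)
  have XJ0: "XJ i 0 = mat 1" using XJ_zero[OF i] .
  have ode: "((\<lambda>s. k (XJ i s *v y)) has_vector_derivative - (AT *v k (XJ i t *v y))) (at t)" for y t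
    unfolding AT_def by (rule k_ode[OF kd dXJ])
  have blmp: "bounded_linear (\<lambda>x. mpow AT j *v x)" for j
    using matrix_vector_mul_linear linear_conv_bounded_linear by blast
  have F1gen: "mpow AT j *v k (XJ i t *v (X *v vel XJ XT Phi q qd i')) \<in> Ki" for j t q qd
  proof (induction j arbitrary: t)
    case 0
    have "k (XJ i t *v (X *v vel XJ XT Phi q qd i')) = k (vel XJ XT Phi (q(i := t)) (qd(i := 0)) i)"
      by (simp add: velUpd2)
    then show ?case using KiI by simp
  next
    case (Suc j)
    let ?y = "X *v vel XJ XT Phi q qd i'"
    have d: "((\<lambda>s. mpow AT j *v k (XJ i s *v ?y)) has_vector_derivative mpow AT j *v (- (AT *v k (XJ i t *v ?y)))) (at t)"
      by (rule bounded_linear.has_vector_derivative[OF blmp ode])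
    have "mpow AT j *v (- (AT *v k (XJ i t *v ?y))) \<in> Ki"
      by (rule deriv_in_subspace[OF subKi _ d]) (rule Suc.IH)
    then have "- (mpow AT j *v (AT *v k (XJ i t *v ?y))) \<in> Ki" by (simp only: mv_neg)
    then have "mpow AT j *v (AT *v k (XJ i t *v ?y)) \<in> Ki" using subspace_neg[OF subKi] by fastforce
    then show ?case by (simp add: matrix_vector_mul_assoc)
  qed
  have F1: "mpow AT j *v (BT *v c) \<in> Ki" if c: "c \<in> Kp" for c j
  proof -
    have lin: "linear (\<lambda>c. mpow AT j *v (BT *v c))"
      by (rule linearI) (simp_all add: matrix_vector_right_distrib matrix_vector_mult_scaleR)
    have sub: "subspace {c. mpow AT j *v (BT *v c) \<in> Ki}"
      using linear_subspace_vimage[OF lin subKi] by (simp add: vimage_def)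
    have cs: "c \<in> span {k (vel XJ XT Phi q qd i') | q qd. True}" using c by (simp add: Kp_def Kspace_def)
    show ?thesis
    proof (rule span_induct[OF cs sub])
      fix x assume "x \<in> {k (vel XJ XT Phi q qd i') | q qd. True}"
      then obtain q qd where x: "x = k (vel XJ XT Phi q qd i')" by blast
      have "mpow AT j *v (BT *v x) = mpow AT j *v k (XJ i 0 *v (X *v vel XJ XT Phi q qd i'))"
        by (simp add: x Ktr XJ0)
      then show "mpow AT j *v (BT *v x) \<in> Ki" using F1gen by simp
    qed
  qed
  have F2: "k2 k x \<Phi> \<in> Ki" if x: "x \<in> Vs" for x
  proof -
    have sub: "subspace {x. k2 k x \<Phi> \<in> Ki}"
      using linear_subspace_vimage[OF linear_k2[OF kd] subKi] by (simp add: vimage_def)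
    have xs: "x \<in> span {vel XJ XT Phi q qd i | q qd. True}" using x by (simp add: Vs_def Vspace_def)
    show ?thesis
    proof (rule span_induct[OF xs sub])
      fix x assume "x \<in> {vel XJ XT Phi q qd i | q qd. True}"
      then obtain q qd where x: "x = vel XJ XT Phi q qd i" by blast
      have e2: "x = XJ i (q i) *v (X *v vel XJ XT Phi q qd i') + qd i *\<^sub>R \<Phi>"
        by (simp only: x velSuc)
      have p: "x + \<Phi> = vel XJ XT Phi q (qd(i := qd i + 1)) i"
        unfolding velUpd e2 by (simp add: algebra_simps)
      have m: "x - \<Phi> = vel XJ XT Phi q (qd(i := qd i - 1)) i"
        unfolding velUpd e2 by (simp add: algebra_simps)
      have "k2 k x \<Phi> = (1/4) *\<^sub>R (k (x + \<Phi>) - k (x - \<Phi>))" by (simp add: k2_def)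
      also have "\<dots> \<in> Ki" unfolding p m
        by (intro subspace_scale[OF subKi] subspace_diff[OF subKi] KiI)
      finally show "k2 k x \<Phi> \<in> Ki" .
    qed
  qed
  define S where "S = stackC (Cprev ** Bmat (transpose X)) (Amat \<Phi>) (Cmat V \<Phi>)"
  define R1 where "R1 = {((Cprev ** Bmat (transpose X)) ** mpow (Amat \<Phi>) (nat (Rep_bit0 (j::10)))) $ r | j r. True}"
  define R2 where "R2 = range (\<lambda>c. Cmat V \<Phi> $ c)"
  have R1_eq: "((Cprev ** Bmat (transpose X)) ** mpow (Amat \<Phi>) n) $ r = mpow AT n *v (BT *v Cprev $ r)" for n r
    by (simp only: row_mult transpose_mpow AT_def BT_def)
  have R2_eq: "Cmat V \<Phi> $ c = k2 k (column c V) \<Phi>" for c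
    by (rule Cmat_row[OF kd])
  have RS: "Range (transpose S) = span (R1 \<union> R2)"
    by (simp add: Range_rows S_def rows_stackC R1_def R2_def)
  have sub1: "R1 \<union> R2 \<subseteq> Ki"
  proof
    fix y assume "y \<in> R1 \<union> R2"
    then show "y \<in> Ki"
    proof
      assume "y \<in> R1"
      then obtain j :: 10 and r where "y = ((Cprev ** Bmat (transpose X)) ** mpow (Amat \<Phi>) (nat (Rep_bit0 j))) $ r"
        unfolding R1_def by blast
      then have y: "y = mpow AT (nat (Rep_bit0 j)) *v (BT *v Cprev $ r)" by (simp only: R1_eq)
      have "Cprev $ r \<in> Kp" unfolding Kp_eq by (rule span_base) blast
      then show ?thesis using F1 y by simp
    next
      assume "y \<in> R2"
      then obtain c where "y = Cmat V \<Phi> $ c" unfolding R2_def by blast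
      then have y: "y = k2 k (column c V) \<Phi>" by (simp only: R2_eq)
      have "column c V \<in> Vs" unfolding Vs_eq by (rule span_base) blast
      then show ?thesis using F2 y by simp
    qed
  qed
  define W where "W = span {mpow AT j *v x | j x. j < CARD(10) \<and> x \<in> range (\<lambda>r. BT *v Cprev $ r)}"
  have subW: "subspace W" by (simp add: W_def)
  have W_sub: "W \<subseteq> span (R1 \<union> R2)"
    unfolding W_def
  proof (rule span_mono, rule subsetI)
    fix y assume "y \<in> {mpow AT j *v x | j x. j < CARD(10) \<and> x \<in> range (\<lambda>r. BT *v Cprev $ r)}"
    then obtain j r where y: "y = mpow AT j *v (BT *v Cprev $ r)" and j: "j < 10" by auto
    obtain jj :: 10 where jj: "nat (Rep_bit0 jj) = j" using Rep_bit0_10[OF j] by blast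
    have "y = ((Cprev ** Bmat (transpose X)) ** mpow (Amat \<Phi>) (nat (Rep_bit0 jj))) $ r"
      by (simp only: R1_eq jj y)
    then have "y \<in> R1" unfolding R1_def by blast
    then show "y \<in> R1 \<union> R2" by blast
  qed
  have Winv: "(- AT) *v w \<in> W" if "w \<in> W" for w
  proof -
    have "AT *v w \<in> W" using krylov_invariant[of w AT] that by (simp add: W_def)
    then show ?thesis by (simp add: neg_mv subspace_neg[OF subW])
  qed
  have R2span: "k2 k x \<Phi> \<in> span (R1 \<union> R2)" if x: "x \<in> Vs" for x
  proof -
    have "k2 k x \<Phi> \<in> (\<lambda>x. k2 k x \<Phi>) ` span (range (\<lambda>c. column c V))" using x Vs_eq by blast
    also have "\<dots> = span ((\<lambda>x. k2 k x \<Phi>) ` range (\<lambda>c. column c V))"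
      by (rule span_linear_image[OF linear_k2[OF kd], symmetric])
    also have "\<dots> \<subseteq> span (R1 \<union> R2)"
      by (rule span_mono) (auto simp: R2_def R2_eq)
    finally show ?thesis .
  qed
  have sub2: "Ki \<subseteq> span (R1 \<union> R2)"
    unfolding Ki_def Kspace_def
  proof (rule span_minimal[OF _ subspace_span], rule subsetI)
    fix g assume "g \<in> {k (vel XJ XT Phi q qd i) | q qd. True}"
    then obtain q qd where g: "g = k (vel XJ XT Phi q qd i)" by blast
    define v0 where "v0 = vel XJ XT Phi q qd i'"
    define y where "y = XJ i (q i) *v (X *v v0)"
    have gv: "vel XJ XT Phi q qd i = y + qd i *\<^sub>R \<Phi>" by (simp add: velSuc y_def v0_def)
    have kg: "g = k y + (2 * qd i) *\<^sub>R k2 k y \<Phi> + (qd i * qd i) *\<^sub>R k2 k \<Phi> \<Phi>"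
      by (simp add: g gv k_plus[OF kd] k_k2[OF kd, of \<Phi>])
    have yV: "y \<in> Vs"
    proof -
      have "y = vel XJ XT Phi q (qd(i := 0)) i" by (simp add: velUpd y_def v0_def)
      then show ?thesis using VsI by simp
    qed
    have PV: "\<Phi> \<in> Vs"
    proof -
      have "vel XJ XT Phi q ((\<lambda>_. 0)(i := 1)) i = \<Phi>" by (simp add: velUpd vel_zero)
      then show ?thesis using VsI by metis
    qed
    have ky: "k y \<in> W"
    proof -
      define u where "u = (\<lambda>s. k (XJ i s *v (X *v v0)))"
      have du: "(u has_vector_derivative (- AT) *v u t) (at t)" for t
        using ode[of "X *v v0" t] by (simp add: u_def neg_mv)
      have "k v0 \<in> Kp" unfolding Kp_def Kspace_def v0_def by (rule span_base) blast
      then have "BT *v k v0 \<in> (\<lambda>c. BT *v c) ` span (range (\<lambda>r. Cprev $ r))" using Kp_eq by blast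
      also have "\<dots> = span ((\<lambda>c. BT *v c) ` range (\<lambda>r. Cprev $ r))"
        by (rule span_linear_image[OF matrix_vector_mul_linear, symmetric])
      also have "\<dots> \<subseteq> W" unfolding W_def
      proof (rule span_mono, rule subsetI)
        fix z assume "z \<in> (\<lambda>c. BT *v c) ` range (\<lambda>r. Cprev $ r)"
        then obtain r where "z = BT *v Cprev $ r" by blast
        then have "z = mpow AT 0 *v (BT *v Cprev $ r) \<and> 0 < CARD(10) \<and> BT *v Cprev $ r \<in> range (\<lambda>r. BT *v Cprev $ r)"
          by simp
        then show "z \<in> {mpow AT j *v x |j x. j < CARD(10) \<and> x \<in> range (\<lambda>r. BT *v Cprev $ r)}"
          by blast
      qed
      finally have "u 0 \<in> W" by (simp add: u_def XJ0 Ktr)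
      note oi = ode_invariant[OF du subW Winv this]
      then have "u (q i) \<in> W" by this
      then show ?thesis by (simp add: u_def y_def)
    qed
    have "k y \<in> span (R1 \<union> R2)" using ky W_sub by blast
    moreover have "k2 k y \<Phi> \<in> span (R1 \<union> R2)" using R2span[OF yV] .
    moreover have "k2 k \<Phi> \<Phi> \<in> span (R1 \<union> R2)" using R2span[OF PV] .
    ultimately show "g \<in> span (R1 \<union> R2)" unfolding kg
      by (intro span_add span_scale)
  qed
  have "Range (transpose S) = Ki"
    unfolding RS using sub1 sub2 span_minimal[OF sub1 subKi] by blast
  then show ?thesis by (simp add: S_def Ki_def \<Phi>_def X_def)
qed


end
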